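(* For every $\lambda\in\Omega=\{\lambda\in\mathbb D:\ 0\le\mathrm{Re}(\lambda)\le|\lambda|^2-\tfrac12\}$ there exist $a>1$ and $b>2^{-1/2}$ such that $R_{a,b}\subset(\lambda R_{a,b}-1)\cup(\lambda R_{a,b}+1)$.
   Context: $\mathbb D$ is the open unit disc. For $a,b>0$, $R_{a,b}\subset\mathbb C$ is the closed rectangle centered at $0$ with vertices $\pm a\pm ib$; $\lambda E+c=\{\lambda z+c:z\in E\}$. *)

theory Defs
  imports "HOL-Analysis.Analysis"
begin

definition rect :: "real \<Rightarrow> real \<Rightarrow> complex set" where
  "rect a b = {z. \<bar>Re z\<bar> \<le> a \<and> \<bar>Im z\<bar> \<le> b}"

definition affimg :: "complex \<Rightarrow> complex set \<Rightarrow> complex \<Rightarrow> complex set" where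
  "affimg l E c = (\<lambda>z. l * z + c) ` E"

definition Omega :: "complex set" where
  "Omega = {l. norm l < 1 \<and> 0 \<le> Re l \<and> Re l \<le> (norm l)^2 - 1/2}"

end

theory Submission
  imports Defs
begin

lemma core:
  fixes x t U V r :: real
  assumes r: "r = x^2 + t^2" and x: "x \<ge> 0" and t: "t > 0" and om: "1 + 2*x \<le> 2*r"
    and U: "\<bar>U\<bar> \<le> 1 + x" and V: "\<bar>V\<bar> \<le> t" and s: "V*x \<le> U*t"
  shows "\<bar>(U - r)*x + V*t\<bar> \<le> (1+x)*r \<and> \<bar>V*x - (U - r)*t\<bar> \<le> t*r"
proof -
  have rp: "r \<ge> 0" using r by simp
  have h1: "U*x \<le> (1+x)*x" using U x by (simp add: mult_right_mono)
  have h2: "V*t \<le> t*t" using V t by (simp add: mult_right_mono)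
  have h3: "x*(2*r-1) \<ge> 0" using x om by simp
  have up: "(U - r)*x + V*t \<le> (1+x)*r"
    using h1 h2 h3 r by (simp add: algebra_simps power2_eq_square)
  have l1: "U*t*x \<ge> V*x*x" using s x by (simp add: mult_right_mono)
  have l2: "V*r \<ge> -t*r" using mult_right_mono[of "-t" V r] V rp by simp
  have "t*(U*x + V*t + r) \<ge> 0" using l1 l2 r by (simp add: algebra_simps power2_eq_square)
  hence "U*x + V*t + r \<ge> 0" using t by (simp add: zero_le_mult_iff)
  hence lo: "(U - r)*x + V*t \<ge> -((1+x)*r)" by (simp add: algebra_simps)
  have i1: "V*x \<ge> -t*x" using mult_right_mono[of "-t" V x] V x by simp
  have i2: "U*t \<le> (1+x)*t" using U t by (simp add: mult_right_mono)
  have i3: "t*(2*r-1-2*x) \<ge> 0" using t om by simp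
  have ilo: "V*x - (U - r)*t \<ge> -(t*r)" using i1 i2 i3 by (simp add: algebra_simps)
  have iup: "V*x - (U - r)*t \<le> t*r" using s by (simp add: algebra_simps)
  show ?thesis using up lo ilo iup by linarith
qed

lemma re_im_div:
  fixes z l :: complex
  shows "Re (z / l) = (Re z * Re l + Im z * Im l) / (Re l ^ 2 + Im l ^ 2)"
    and "Im (z / l) = (Im z * Re l - Re z * Im l) / (Re l ^ 2 + Im l ^ 2)"
  by (simp_all add: Re_divide Im_divide power2_eq_square)

lemma half_case:
  fixes l z :: complex and x t r :: real
  assumes x: "x = Re l" "x \<ge> 0" and t: "t = Im l" "t > 0" and r: "r = x^2 + t^2"
    and om: "1 + 2*x \<le> 2*r"
    and z: "z \<in> rect ((1+x)/r) (t/r)"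
    and s: "Im z * x \<le> Re z * t"
  shows "(z - 1) / l \<in> rect ((1+x)/r) (t/r)"
proof -
  have rp: "r > 0" using r t by (simp add: add_nonneg_pos)
  define U where "U = Re z * r"
  define V where "V = Im z * r"
  have "\<bar>Re z\<bar> \<le> (1+x)/r" using z by (simp add: rect_def)
  hence U: "\<bar>U\<bar> \<le> 1 + x" using rp by (simp add: U_def abs_mult pos_le_divide_eq)
  have "\<bar>Im z\<bar> \<le> t/r" using z by (simp add: rect_def)
  hence V: "\<bar>V\<bar> \<le> t" using rp by (simp add: V_def abs_mult pos_le_divide_eq)
  have sV: "V*x \<le> U*t" using s rp unfolding U_def V_def
    by (metis mult.assoc mult.commute mult_right_mono less_imp_le)
  from core[OF r x(2) t(2) om U V sV]
  have c1: "\<bar>(U - r)*x + V*t\<bar> \<le> (1+x)*r" and c2: "\<bar>V*x - (U - r)*t\<bar> \<le> t*r" by auto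
  have rr: "Re l ^ 2 + Im l ^ 2 = r" using r x t by simp
  have e1: "Re ((z - 1) / l) = ((U - r)*x + V*t) / r^2"
    unfolding re_im_div rr using rp by (simp add: x t U_def V_def field_simps power2_eq_square)
  have e2: "Im ((z - 1) / l) = (V*x - (U - r)*t) / r^2"
    unfolding re_im_div rr using rp by (simp add: x t U_def V_def field_simps power2_eq_square)
  have "\<bar>Re ((z - 1) / l)\<bar> \<le> (1+x)/r"
  proof -
    have "\<bar>(U - r)*x + V*t\<bar> / r^2 \<le> ((1+x)*r) / r^2" using c1 rp by (simp add: divide_right_mono)
    also have "... = (1+x)/r" using rp by (simp add: power2_eq_square)
    finally show ?thesis by (simp add: e1 abs_divide)
  qed
  moreover have "\<bar>Im ((z - 1) / l)\<bar> \<le> t/r"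
  proof -
    have "\<bar>V*x - (U - r)*t\<bar> / r^2 \<le> (t*r) / r^2" using c2 rp by (simp add: divide_right_mono)
    also have "... = t/r" using rp by (simp add: power2_eq_square)
    finally show ?thesis by (simp add: e2 abs_divide)
  qed
  ultimately show ?thesis by (simp add: rect_def)
qed


lemma rect_uminus: "(- w \<in> rect a b) = (w \<in> rect a b)"
  by (simp add: rect_def)

lemma rect_cnj: "(cnj w \<in> rect a b) = (w \<in> rect a b)"
  by (simp add: rect_def)

lemma pos_main:
  assumes "l \<in> Omega" and tpos: "Im l > 0"
  shows "\<exists>a b::real. a > 1 \<and> b > 1 / sqrt 2 \<and>
           rect a b \<subseteq> affimg l (rect a b) (-1) \<union> affimg l (rect a b) 1"
proof -
  define x where "x = Re l"
  define t where "t = Im l"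
  define r where "r = x^2 + t^2"
  have nr: "(norm l)^2 = r" by (simp add: cmod_power2 x_def t_def r_def)
  have "norm l < 1" using assms(1) unfolding Omega_def by simp
  hence "(norm l)^2 < 1" by (simp add: power_less_one_iff)
  hence r1: "r < 1" using nr by simp
  have x0: "x \<ge> 0" and xr: "x \<le> r - 1/2" using assms(1) nr unfolding Omega_def x_def by auto
  have t0: "t > 0" using tpos t_def by simp
  have rp: "r > 0" using t0 r_def by (simp add: add_nonneg_pos)
  have om: "1 + 2*x \<le> 2*r" using xr by simp
  define a where "a = (1+x)/r"
  define b where "b = t/r"
  have a1: "a > 1" using r1 x0 rp by (simp add: a_def)
  have "2*t^2 > r^2"
  proof -
    have "x^2 \<le> (r - 1/2)^2" using x0 xr by (simp add: power_mono)
    moreover have "r*(4 - 3*r) > r*1" using rp r1 by (intro mult_strict_left_mono) auto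
    moreover have "r \<ge> 1/2" using x0 xr by simp
    ultimately show ?thesis unfolding r_def[symmetric, of] using r_def
      by (simp add: algebra_simps power2_eq_square)
  qed
  hence "(1 / sqrt 2)^2 < b^2" using rp
    by (simp add: b_def power_divide divide_simps)
  hence b1: "b > 1 / sqrt 2" using rp t0 b_def
    by (metis divide_pos_pos less_imp_le power_less_imp_less_base)
  have cover: "rect a b \<subseteq> affimg l (rect a b) (-1) \<union> affimg l (rect a b) 1"
  proof
    fix z assume z: "z \<in> rect a b"
    have l0: "l \<noteq> 0" using tpos by auto
    show "z \<in> affimg l (rect a b) (-1) \<union> affimg l (rect a b) 1"
    proof (cases "Im z * x \<le> Re z * t")
      case True
      have w: "(z - 1) / l \<in> rect a b"
        using half_case[OF x_def x0 t_def t0 r_def om] z True by (simp add: a_def b_def)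
      have "z = l * ((z - 1) / l) + 1" using l0 by simp
      hence "z \<in> affimg l (rect a b) 1" unfolding affimg_def using w by blast
      thus ?thesis by blast
    next
      case False
      have mz: "- z \<in> rect a b" using z rect_uminus by blast
      have w: "(- z - 1) / l \<in> rect a b"
        using half_case[OF x_def x0 t_def t0 r_def om] mz False by (simp add: a_def b_def)
      hence w': "- ((- z - 1) / l) \<in> rect a b" using rect_uminus by blast
      have "z = l * (- ((- z - 1) / l)) + (-1)" using l0 by (simp add: field_simps)
      hence "z \<in> affimg l (rect a b) (-1)" unfolding affimg_def using w' by blast
      thus ?thesis by blast
    qed
  qed
  show ?thesis using a1 b1 cover by blast
qed

theorem mainTheorem12:
  assumes "l \<in> Omega"
  shows "\<exists>a b::real. a > 1 \<and> b > 1 / sqrt 2 \<and>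
           rect a b \<subseteq> affimg l (rect a b) (-1) \<union> affimg l (rect a b) 1"
proof -
  have "Im l \<noteq> 0"
  proof
    assume i: "Im l = 0"
    have "(norm l)^2 = (Re l)^2" using i by (simp add: cmod_power2)
    moreover have "norm l < 1" "0 \<le> Re l" "Re l \<le> (norm l)^2 - 1/2" using assms by (auto simp: Omega_def)
    ultimately have "Re l < 1" "0 \<le> Re l" "Re l \<le> (Re l)^2 - 1/2"
      by (auto simp: abs_square_less_1 i cmod_def)
    moreover have "(Re l)^2 \<le> Re l" using calculation by (simp add: power2_eq_square mult_left_le)
    ultimately show False by simp
  qed
  then consider "Im l > 0" | "Im l < 0" by linarith
  thus ?thesis
  proof cases
    case 1 thus ?thesis using pos_main assms by blast
  next
    case 2
    have "cnj l \<in> Omega" using assms by (simp add: Omega_def)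
    moreover have "Im (cnj l) > 0" using 2 by simp
    ultimately obtain a b :: real where ab: "a > 1" "b > 1 / sqrt 2"
      and cov: "rect a b \<subseteq> affimg (cnj l) (rect a b) (-1) \<union> affimg (cnj l) (rect a b) 1"
      using pos_main by blast
    have "rect a b \<subseteq> affimg l (rect a b) (-1) \<union> affimg l (rect a b) 1"
    proof
      fix z assume "z \<in> rect a b"
      hence "cnj z \<in> rect a b" using rect_cnj by blast
      hence "cnj z \<in> affimg (cnj l) (rect a b) (-1) \<union> affimg (cnj l) (rect a b) 1" using cov by blast
      then obtain w c where w: "w \<in> rect a b" and c: "c = -1 \<or> c = 1" and e: "cnj z = cnj l * w + c"
        unfolding affimg_def by blast
      have "z = l * cnj w + c" using arg_cong[OF e, of cnj] c by auto
      moreover have "cnj w \<in> rect a b" using w rect_cnj by blast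
      ultimately show "z \<in> affimg l (rect a b) (-1) \<union> affimg l (rect a b) 1"
        unfolding affimg_def using c by blast
    qed
    thus ?thesis using ab by blast
  qed
qed

end
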